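(* Let $(\mathcal{Z},d)$ be a Polish metric space, $p\in(1,\infty)$, $q=p/(p-1)$, $\alpha>0$, $\mathbb{P}\in\mathcal{P}_p(\mathcal{Z})$. Let $\ell:\mathcal{Z}\to\mathbb{R}$ be Borel and integrable with respect to every $\mathbb{Q}\in\mathfrak{W}^\alpha_p(\mathbb{P})$, and let $G:\mathcal{Z}\to[0,\infty)$ be Borel. Assume that for every $z,z'\in\mathcal{Z}$ there is a constant-speed geodesic $\varrho:[0,1]\to\mathcal{Z}$ with $\varrho(0)=z$, $\varrho(1)=z'$ such that $$|\ell(z')-\ell(z)|\le\Big(\int_0^1G(\varrho(t))\,dt\Big)\,d(z,z')\quad\text{and}\quad G(\varrho(t))\le(1-t)G(z)+tG(z')\ \ \forall t\in[0,1].$$ Let $\mu=\sup_{\mathbb{Q}\in\mathfrak{W}^\alpha_p(\mathbb{P})}\big(\mathbb{E}_{z\sim\mathbb{Q}}[G(z)^q]\big)^{1/q}$. Then for every $\mathbb{Q}\in\mathfrak{W}^\alpha_p(\mathbb{P})$, $$R_{\mathbb{Q}}(\ell)\le R_{\mathbb{P},\alpha,p}(\ell)\le R_{\mathbb{Q}}(\ell)+2\alpha\mu.$$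
   Context: A constant-speed geodesic from $z$ to $z'$ is a map $\varrho:[0,1]\to\mathcal{Z}$ with $\varrho(0)=z$, $\varrho(1)=z'$ and $d(\varrho(s),\varrho(t))=(t-s)\,d(z,z')$ for $0\le s\le t\le1$. $\mathcal{P}_p(\mathcal{Z})$ is the set of Borel probability measures with finite $p$-th moment; $\mathcal{W}_p(\mathbb{P},\mathbb{Q})=\big(\inf_{\gamma\in\Gamma(\mathbb{P},\mathbb{Q})}\int d(z,z')^p\,d\gamma\big)^{1/p}$ over couplings $\gamma$; $\mathfrak{W}^\alpha_p(\mathbb{P})=\{\mathbb{Q}\in\mathcal{P}_p(\mathcal{Z}):\mathcal{W}_p(\mathbb{P},\mathbb{Q})\le\alpha\}$; $R_{\mathbb{Q}}(\ell)=\int\ell\,d\mathbb{Q}$ and $R_{\mathbb{P},\alpha,p}(\ell)=\sup_{\mathbb{Q}\in\mathfrak{W}^\alpha_p(\mathbb{P})}R_{\mathbb{Q}}(\ell)$. *)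

theory Defs
  imports "HOL-Probability.Probability"
begin

definition borel_prob :: "'a::metric_space measure \<Rightarrow> bool" where
  "borel_prob P \<longleftrightarrow> prob_space P \<and> sets P = sets borel"

definition Pp :: "real \<Rightarrow> 'a::metric_space measure set" where
  "Pp p = {P. borel_prob P \<and> (\<exists>z0. (\<integral>\<^sup>+ z. ennreal (dist z0 z powr p) \<partial>P) < \<infinity>)}"

definition couplings :: "'a::metric_space measure \<Rightarrow> 'a measure \<Rightarrow> ('a \<times> 'a) measure set" where
  "couplings P Q = {\<gamma>. prob_space \<gamma> \<and> sets \<gamma> = sets (borel \<Otimes>\<^sub>M borel)
                        \<and> distr \<gamma> borel fst = P \<and> distr \<gamma> borel snd = Q}"

text \<open>p-Wasserstein distance (finite for P, Q in P_p).\<close>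
definition wasserstein :: "real \<Rightarrow> 'a::metric_space measure \<Rightarrow> 'a measure \<Rightarrow> real" where
  "wasserstein p P Q =
     (enn2real (INF \<gamma>\<in>couplings P Q. \<integral>\<^sup>+ x. ennreal (dist (fst x) (snd x) powr p) \<partial>\<gamma>)) powr (1/p)"

definition wball :: "real \<Rightarrow> real \<Rightarrow> 'a::metric_space measure \<Rightarrow> 'a measure set" where
  "wball p \<alpha> P = {Q \<in> Pp p. wasserstein p P Q \<le> \<alpha>}"

definition risk :: "'a measure \<Rightarrow> ('a \<Rightarrow> real) \<Rightarrow> real" where
  "risk Q l = (\<integral>z. l z \<partial>Q)"

definition worst_risk :: "real \<Rightarrow> real \<Rightarrow> 'a::metric_space measure \<Rightarrow> ('a \<Rightarrow> real) \<Rightarrow> ereal" where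
  "worst_risk p \<alpha> P l = (SUP Q\<in>wball p \<alpha> P. ereal (risk Q l))"

definition constant_speed_geodesic :: "(real \<Rightarrow> 'a::metric_space) \<Rightarrow> 'a \<Rightarrow> 'a \<Rightarrow> bool" where
  "constant_speed_geodesic \<rho> z z' \<longleftrightarrow> \<rho> 0 = z \<and> \<rho> 1 = z' \<and>
     (\<forall>s t. 0 \<le> s \<longrightarrow> s \<le> t \<longrightarrow> t \<le> 1 \<longrightarrow> dist (\<rho> s) (\<rho> t) = (t - s) * dist z z')"

definition Lq_norm :: "real \<Rightarrow> 'a measure \<Rightarrow> ('a \<Rightarrow> real) \<Rightarrow> ereal" where
  "Lq_norm q Q G = (let I = (\<integral>\<^sup>+ z. ennreal (G z powr q) \<partial>Q) in
     if I = \<infinity> then \<infinity> else ereal (enn2real I powr (1/q)))"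

end

theory Submission
  imports Defs
begin

lemma geo_int_bound:
  fixes f :: "real \<Rightarrow> real" and a b :: real
  assumes nn: "\<And>t. 0 \<le> f t" and ab: "0 \<le> a" "0 \<le> b"
    and le: "\<forall>t\<in>{0..1}. f t \<le> (1 - t) * a + t * b"
  shows "(LBINT t=0..1. f t) \<le> (a + b) / 2"
proof -
  have eq: "(LBINT t=0..1. f t) = (LBINT t:{0..1}. f t)"
    using interval_integral_Icc[of 0 1 f] by (simp add: zero_ereal_def one_ereal_def)
  have g: "interval_lebesgue_integral lborel (ereal 0) (ereal 1) (\<lambda>t. (1 - t) * a + t * b) = (1*a - (1*1)/2*a + (1*1)/2 * b) - (0*a - (0*0)/2*a + (0*0)/2 * b)"
    by (rule interval_integral_FTC_finite[where F="\<lambda>t. t*a - (t*t)/2*a + (t*t)/2 * b"])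
     (auto intro!: continuous_intros derivative_eq_intros simp: algebra_simps)
  have g2: "(LBINT t:{0..1}. (1 - t) * a + t * b) = (a+b)/2"
    using g interval_integral_Icc[of 0 1 "\<lambda>t. (1 - t) * a + t * b"] by (simp add: field_simps)
  show ?thesis
  proof (cases "set_integrable lborel {0..1::real} f")
    case True
    have "(LBINT t:{0..1}. f t) \<le> (LBINT t:{0..1}. (1 - t) * a + t * b)"
      apply (rule set_integral_mono[OF True])
      using le
      by (auto intro!: borel_integrable_atLeastAtMost' continuous_intros)
    then show ?thesis using eq g2 by simp
  next
    case False
    then have "(LBINT t:{0..1}. f t) = 0"
      unfolding set_lebesgue_integral_def set_integrable_def
      by (simp add: not_integrable_integral_eq)
    then show ?thesis using eq ab by simp
  qed
qed

lemma holder_nn: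
  fixes f g :: "'b \<Rightarrow> real" and p q A B :: real
  assumes pq: "p > 1" "q > 1" "1/p + 1/q = 1"
    and mf[measurable]: "f \<in> borel_measurable M" and mg[measurable]: "g \<in> borel_measurable M"
    and fnn: "\<And>x. 0 \<le> f x" and gnn: "\<And>x. 0 \<le> g x"
    and IA: "(\<integral>\<^sup>+x. ennreal (f x powr q) \<partial>M) = ennreal A" and A0: "0 \<le> A"
    and IB: "(\<integral>\<^sup>+x. ennreal (g x powr p) \<partial>M) = ennreal B" and B0: "0 \<le> B"
  shows "(\<integral>\<^sup>+x. ennreal (f x * g x) \<partial>M) \<le> ennreal (A powr (1/q) * B powr (1/p))"
proof (cases "A = 0 \<or> B = 0")
  case True
  have "(\<integral>\<^sup>+x. ennreal (f x * g x) \<partial>M) = 0"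
  proof (cases "A = 0")
    case True
    then have "AE x in M. ennreal (f x powr q) = 0"
      using IA by (subst nn_integral_0_iff_AE[symmetric]) auto
    then have "AE x in M. ennreal (f x * g x) = 0"
      by eventually_elim (use fnn in auto)
    then show ?thesis by (simp add: nn_integral_0_iff_AE)
  next
    case False
    then have "B = 0" using \<open>A = 0 \<or> B = 0\<close> by simp
    then have "AE x in M. ennreal (g x powr p) = 0"
      using IB by (subst nn_integral_0_iff_AE[symmetric]) auto
    then have "AE x in M. ennreal (f x * g x) = 0"
      by eventually_elim (use gnn in auto)
    then show ?thesis by (simp add: nn_integral_0_iff_AE)
  qed
  then show ?thesis by simp
next
  case False
  then have Ap: "A > 0" and Bp: "B > 0" using A0 B0 by auto
  define a where "a = A powr (1/q)"
  define b where "b = B powr (1/p)"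
  have ap: "a > 0" and bp: "b > 0" using Ap Bp by (auto simp: a_def b_def)
  have aq: "a powr q = A" using Ap pq by (simp add: a_def powr_powr)
  have bp': "b powr p = B" using Bp pq by (simp add: b_def powr_powr)
  have pt: "f x * g x \<le> a * b * (f x powr q / (q * A) + g x powr p / (p * B))" for x
  proof -
    have "(f x / a) * (g x / b) \<le> (f x / a) powr q / q + (g x / b) powr p / p"
      using Youngs_inequality[of q p "f x / a" "g x / b"] pq ap bp fnn gnn by (simp add: add.commute)
    also have "\<dots> = f x powr q / (q * A) + g x powr p / (p * B)"
      using ap bp fnn gnn aq bp' by (simp add: powr_divide mult.commute)
    finally show ?thesis using ap bp by (simp add: field_simps)
  qed
  have "(\<integral>\<^sup>+x. ennreal (f x * g x) \<partial>M) \<le>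
      (\<integral>\<^sup>+x. ennreal (a * b / (q * A)) * ennreal (f x powr q) + ennreal (a * b / (p * B)) * ennreal (g x powr p) \<partial>M)"
  proof (rule nn_integral_mono)
    fix x
    have c1: "0 \<le> a * b / (q * A)" and c2: "0 \<le> a * b / (p * B)" using ap bp Ap Bp pq by auto
    have u: "0 \<le> f x powr q" and v: "0 \<le> g x powr p" by auto
    have "ennreal (a * b / (q * A)) * ennreal (f x powr q) + ennreal (a * b / (p * B)) * ennreal (g x powr p)
        = ennreal (a * b / (q * A) * f x powr q + a * b / (p * B) * g x powr p)"
      by (simp only: ennreal_mult[OF c1 u, symmetric] ennreal_mult[OF c2 v, symmetric] ennreal_plus[OF mult_nonneg_nonneg[OF c1 u] mult_nonneg_nonneg[OF c2 v], symmetric])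
    moreover have "f x * g x \<le> a * b / (q * A) * f x powr q + a * b / (p * B) * g x powr p"
      using pt[of x] by (simp add: field_simps)
    ultimately show "ennreal (f x * g x) \<le> ennreal (a * b / (q * A)) * ennreal (f x powr q) + ennreal (a * b / (p * B)) * ennreal (g x powr p)"
      by (simp add: ennreal_leI)
  qed
  also have "\<dots> = ennreal (a * b / (q * A)) * ennreal A + ennreal (a * b / (p * B)) * ennreal B"
    by (simp add: nn_integral_add nn_integral_cmult IA IB)
  also have "\<dots> = ennreal (a * b * (1/q + 1/p))"
    using ap bp Ap Bp pq
    by (simp add: ennreal_mult[symmetric] ennreal_plus[symmetric] field_simps del: ennreal_plus)
  also have "\<dots> = ennreal (A powr (1/q) * B powr (1/p))"
    using pq by (simp add: a_def b_def add.commute)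
  finally show ?thesis .
qed


lemma borel_prob_meas:
  assumes "borel_prob A" "f \<in> borel_measurable borel"
  shows "f \<in> borel_measurable A"
proof -
  have "sets A = sets borel" using assms(1) by (simp add: borel_prob_def)
  then show ?thesis using assms(2) measurable_cong_sets[OF \<open>sets A = sets borel\<close> refl] by simp
qed
lemma distr_pair_snd':
  assumes "prob_space A" "prob_space B"
  shows "distr (A \<Otimes>\<^sub>M B) B snd = B"
proof (intro measure_eqI)
  interpret A: prob_space A by fact
  interpret B: prob_space B by fact
  interpret pair_sigma_finite A B ..
  fix X assume X: "X \<in> sets (distr (A \<Otimes>\<^sub>M B) B snd)"
  then have X': "X \<in> sets B" by simp
  have "emeasure (distr (A \<Otimes>\<^sub>M B) B snd) X = emeasure (A \<Otimes>\<^sub>M B) (snd -` X \<inter> space (A \<Otimes>\<^sub>M B))"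
    using X' by (simp add: emeasure_distr)
  also have "snd -` X \<inter> space (A \<Otimes>\<^sub>M B) = space A \<times> X"
    using X' sets.sets_into_space[OF X'] by (auto simp: space_pair_measure)
  finally show "emeasure (distr (A \<Otimes>\<^sub>M B) B snd) X = emeasure B X"
    using X' by (simp add: B.emeasure_pair_measure_Times[OF sets.top X'] A.emeasure_space_1)
qed simp
lemma prod_coupling:
  fixes A B :: "'a::metric_space measure"
  assumes "borel_prob A" "borel_prob B"
  shows "A \<Otimes>\<^sub>M B \<in> couplings A B"
proof -
  have pA: "prob_space A" and sA: "sets A = sets borel" and pB: "prob_space B" and sB: "sets B = sets borel"
    using assms by (auto simp: borel_prob_def)
  have s: "sets (A \<Otimes>\<^sub>M B) = sets (borel \<Otimes>\<^sub>M borel)"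
    by (rule sets_pair_measure_cong[OF sA sB])
  have "distr (A \<Otimes>\<^sub>M B) borel fst = distr (A \<Otimes>\<^sub>M B) A fst"
    by (rule distr_cong) (auto simp: sA)
  also have "\<dots> = A" using prob_space.distr_pair_fst[OF pB, of A] .
  finally have 1: "distr (A \<Otimes>\<^sub>M B) borel fst = A" .
  have "distr (A \<Otimes>\<^sub>M B) borel snd = distr (A \<Otimes>\<^sub>M B) B snd"
    by (rule distr_cong) (auto simp: sB)
  also have "\<dots> = B" using distr_pair_snd'[OF pA pB] .
  finally have 2: "distr (A \<Otimes>\<^sub>M B) borel snd = B" .
  show ?thesis unfolding couplings_def using prob_space_pair[OF pA pB] s 1 2 by auto
qed

lemma diag_coupling:
  fixes A :: "'a::metric_space measure"
  assumes "borel_prob A"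
  shows "distr A (borel \<Otimes>\<^sub>M borel) (\<lambda>z. (z, z)) \<in> couplings A A"
proof -
  have pA: "prob_space A" and sA: "sets A = sets borel"
    using assms by (auto simp: borel_prob_def)
  have m: "(\<lambda>z. (z, z)) \<in> A \<rightarrow>\<^sub>M borel \<Otimes>\<^sub>M borel"
    by (rule measurable_Pair) (auto simp: measurable_cong_sets[OF sA refl])
  have "distr (distr A (borel \<Otimes>\<^sub>M borel) (\<lambda>z. (z, z))) borel fst = distr A borel (fst \<circ> (\<lambda>z. (z, z)))"
    by (rule distr_distr) (auto simp: m)
  also have "\<dots> = distr A A (\<lambda>x. x)" by (rule distr_cong) (auto simp: sA)
  also have "\<dots> = A" by (rule distr_id2) simp
  finally have 1: "distr (distr A (borel \<Otimes>\<^sub>M borel) (\<lambda>z. (z, z))) borel fst = A" .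
  have "distr (distr A (borel \<Otimes>\<^sub>M borel) (\<lambda>z. (z, z))) borel snd = distr A borel (snd \<circ> (\<lambda>z. (z, z)))"
    by (rule distr_distr) (auto simp: m)
  also have "\<dots> = distr A A (\<lambda>x. x)" by (rule distr_cong) (auto simp: sA)
  also have "\<dots> = A" by (rule distr_id2) simp
  finally have 2: "distr (distr A (borel \<Otimes>\<^sub>M borel) (\<lambda>z. (z, z))) borel snd = A" .
  show ?thesis unfolding couplings_def
    using prob_space.prob_space_distr[OF pA m] 1 2 by auto
qed

lemma coupling_facts:
  fixes A B :: "'a::{metric_space,second_countable_topology} measure"
  assumes "\<gamma> \<in> couplings A B"
  shows "prob_space \<gamma>" "sets \<gamma> = sets borel" "distr \<gamma> borel fst = A" "distr \<gamma> borel snd = B"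
    "fst \<in> \<gamma> \<rightarrow>\<^sub>M borel" "snd \<in> \<gamma> \<rightarrow>\<^sub>M borel"
proof -
  have s0: "sets \<gamma> = sets (borel \<Otimes>\<^sub>M (borel :: 'a measure))" using assms by (simp add: couplings_def)
  then show s: "sets \<gamma> = sets borel" by (simp only: borel_prod)
  show "prob_space \<gamma>" "distr \<gamma> borel fst = A" "distr \<gamma> borel snd = B"
    using assms by (auto simp: couplings_def)
  have "fst \<in> (borel \<Otimes>\<^sub>M borel) \<rightarrow>\<^sub>M (borel :: 'a measure)" by (rule measurable_fst)
  then show "fst \<in> \<gamma> \<rightarrow>\<^sub>M borel"
    by (metis measurable_cong_sets[OF s0 refl])
  have "snd \<in> (borel \<Otimes>\<^sub>M borel) \<rightarrow>\<^sub>M (borel :: 'a measure)" by (rule measurable_snd)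
  then show "snd \<in> \<gamma> \<rightarrow>\<^sub>M borel"
    by (metis measurable_cong_sets[OF s0 refl])
qed

lemma coupling_nn_fst:
  fixes h :: "'a::{metric_space,second_countable_topology} \<Rightarrow> ennreal"
  assumes "\<gamma> \<in> couplings A B" "h \<in> borel_measurable borel"
  shows "(\<integral>\<^sup>+x. h (fst x) \<partial>\<gamma>) = (\<integral>\<^sup>+z. h z \<partial>A)"
proof -
  note cf = coupling_facts[OF assms(1)]
  have "(\<integral>\<^sup>+z. h z \<partial>A) = (\<integral>\<^sup>+z. h z \<partial>distr \<gamma> borel fst)" using cf by simp
  also have "\<dots> = (\<integral>\<^sup>+x. h (fst x) \<partial>\<gamma>)"
    by (rule nn_integral_distr[OF cf(5)]) (use assms(2) in simp)
  finally show ?thesis by simp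
qed

lemma coupling_nn_snd:
  fixes h :: "'a::{metric_space,second_countable_topology} \<Rightarrow> ennreal"
  assumes "\<gamma> \<in> couplings A B" "h \<in> borel_measurable borel"
  shows "(\<integral>\<^sup>+x. h (snd x) \<partial>\<gamma>) = (\<integral>\<^sup>+z. h z \<partial>B)"
proof -
  note cf = coupling_facts[OF assms(1)]
  have "(\<integral>\<^sup>+z. h z \<partial>B) = (\<integral>\<^sup>+z. h z \<partial>distr \<gamma> borel snd)" using cf by simp
  also have "\<dots> = (\<integral>\<^sup>+x. h (snd x) \<partial>\<gamma>)"
    by (rule nn_integral_distr[OF cf(6)]) (use assms(2) in simp)
  finally show ?thesis by simp
qed

lemma coupling_int_fst:
  fixes l :: "'a::{metric_space,second_countable_topology} \<Rightarrow> real"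
  assumes "\<gamma> \<in> couplings A B" "l \<in> borel_measurable borel" "integrable A l"
  shows "integrable \<gamma> (\<lambda>x. l (fst x))" "(\<integral>x. l (fst x) \<partial>\<gamma>) = (\<integral>z. l z \<partial>A)"
proof -
  note cf = coupling_facts[OF assms(1)]
  show "integrable \<gamma> (\<lambda>x. l (fst x))"
    using assms(3) integrable_distr_eq[OF cf(5) assms(2)] cf(3) by simp
  show "(\<integral>x. l (fst x) \<partial>\<gamma>) = (\<integral>z. l z \<partial>A)"
    using integral_distr[OF cf(5) assms(2)] cf(3) by simp
qed

lemma coupling_int_snd:
  fixes l :: "'a::{metric_space,second_countable_topology} \<Rightarrow> real"
  assumes "\<gamma> \<in> couplings A B" "l \<in> borel_measurable borel" "integrable B l"
  shows "integrable \<gamma> (\<lambda>x. l (snd x))" "(\<integral>x. l (snd x) \<partial>\<gamma>) = (\<integral>z. l z \<partial>B)"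
proof -
  note cf = coupling_facts[OF assms(1)]
  show "integrable \<gamma> (\<lambda>x. l (snd x))"
    using assms(3) integrable_distr_eq[OF cf(6) assms(2)] cf(4) by simp
  show "(\<integral>x. l (snd x) \<partial>\<gamma>) = (\<integral>z. l z \<partial>B)"
    using integral_distr[OF cf(6) assms(2)] cf(4) by simp
qed

lemma pw3:
  fixes a b c p :: real
  assumes "0 \<le> a" "0 \<le> b" "0 \<le> c" "0 < p"
  shows "(a + b + c) powr p \<le> 3 powr p * (a powr p + b powr p + c powr p)"
proof -
  define m where "m = max a (max b c)"
  have m0: "0 \<le> m" using assms by (simp add: m_def)
  have "(a + b + c) powr p \<le> (3 * m) powr p"
    by (rule powr_mono2) (use assms in \<open>auto simp: m_def\<close>)
  also have "\<dots> = 3 powr p * m powr p" using m0 by (simp add: powr_mult)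
  also have "m powr p \<le> a powr p + b powr p + c powr p"
    using assms unfolding m_def max_def by auto
  then have "3 powr p * m powr p \<le> 3 powr p * (a powr p + b powr p + c powr p)" by simp
  finally show ?thesis .
qed


lemma Pp_borel_prob: "A \<in> Pp p \<Longrightarrow> borel_prob A"
  by (simp add: Pp_def)

lemma coupling_nn_fst_cmult:
  fixes A B :: "'a::{metric_space,second_countable_topology} measure"
  assumes "\<gamma> \<in> couplings A B" "u \<in> borel_measurable borel" "\<And>z. 0 \<le> u z" "0 \<le> c"
  shows "(\<integral>\<^sup>+x. ennreal (c * u (fst x)) \<partial>\<gamma>) = ennreal c * (\<integral>\<^sup>+z. ennreal (u z) \<partial>A)"
proof -
  have "(\<integral>\<^sup>+x. ennreal (c * u (fst x)) \<partial>\<gamma>) = (\<integral>\<^sup>+z. ennreal (c * u z) \<partial>A)"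
    by (rule coupling_nn_fst[OF assms(1), of "\<lambda>z. ennreal (c * u z)"]) (use assms(2) in simp)
  also have "\<dots> = (\<integral>\<^sup>+z. ennreal c * ennreal (u z) \<partial>A)"
    using assms by (simp add: ennreal_mult)
  also have "\<dots> = ennreal c * (\<integral>\<^sup>+z. ennreal (u z) \<partial>A)"
  proof (rule nn_integral_cmult)
    have sA: "sets A = sets borel" using coupling_facts(3)[OF assms(1)] by (metis sets_distr)
    show "(\<lambda>z. ennreal (u z)) \<in> borel_measurable A"
    proof -
      have "u \<in> borel_measurable A" using assms(2) by (metis measurable_cong_sets[OF sA refl])
      then show ?thesis by measurable
    qed
  qed
  finally show ?thesis .
qed


lemma coupling_nn_snd_cmult:
  fixes A B :: "'a::{metric_space,second_countable_topology} measure"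
  assumes "\<gamma> \<in> couplings A B" "u \<in> borel_measurable borel" "\<And>z. 0 \<le> u z" "0 \<le> c"
  shows "(\<integral>\<^sup>+x. ennreal (c * u (snd x)) \<partial>\<gamma>) = ennreal c * (\<integral>\<^sup>+z. ennreal (u z) \<partial>B)"
proof -
  have "(\<integral>\<^sup>+x. ennreal (c * u (snd x)) \<partial>\<gamma>) = (\<integral>\<^sup>+z. ennreal (c * u z) \<partial>B)"
    by (rule coupling_nn_snd[OF assms(1), of "\<lambda>z. ennreal (c * u z)"]) (use assms(2) in simp)
  also have "\<dots> = (\<integral>\<^sup>+z. ennreal c * ennreal (u z) \<partial>B)"
    using assms by (simp add: ennreal_mult)
  also have "\<dots> = ennreal c * (\<integral>\<^sup>+z. ennreal (u z) \<partial>B)"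
  proof (rule nn_integral_cmult)
    have sB: "sets B = sets borel" using coupling_facts(4)[OF assms(1)] by (metis sets_distr)
    show "(\<lambda>z. ennreal (u z)) \<in> borel_measurable B"
    proof -
      have "u \<in> borel_measurable B" using assms(2) by (metis measurable_cong_sets[OF sB refl])
      then show ?thesis by measurable
    qed
  qed
  finally show ?thesis .
qed

lemma cost_finite:
  fixes A B :: "'a::{metric_space,second_countable_topology} measure"
  assumes "A \<in> Pp p" "B \<in> Pp p" "0 < p"
  shows "(\<integral>\<^sup>+x. ennreal (dist (fst x) (snd x) powr p) \<partial>(A \<Otimes>\<^sub>M B)) < \<infinity>"
proof -
  obtain z0 where z0: "(\<integral>\<^sup>+z. ennreal (dist z0 z powr p) \<partial>A) < \<infinity>" using assms(1) by (auto simp: Pp_def)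
  obtain z1 where z1: "(\<integral>\<^sup>+z. ennreal (dist z1 z powr p) \<partial>B) < \<infinity>" using assms(2) by (auto simp: Pp_def)
  define \<gamma> where "\<gamma> = A \<Otimes>\<^sub>M B"
  have \<gamma>: "\<gamma> \<in> couplings A B" unfolding \<gamma>_def
    by (rule prod_coupling) (use assms in \<open>auto simp: Pp_def\<close>)
  note cf = coupling_facts[OF \<gamma>]
  interpret prob_space \<gamma> by (rule cf(1))
  note [measurable] = cf(5) cf(6)
  define c where "c = 3 powr p"
  have c0: "0 \<le> c" by (simp add: c_def)
  have "(\<integral>\<^sup>+x. ennreal (dist (fst x) (snd x) powr p) \<partial>\<gamma>) \<le>
     (\<integral>\<^sup>+x. ennreal (c * dist z0 (fst x) powr p) + ennreal (c * dist z0 z1 powr p) + ennreal (c * dist z1 (snd x) powr p) \<partial>\<gamma>)"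
  proof (rule nn_integral_mono)
    fix x :: "'a \<times> 'a"
    have "dist (fst x) (snd x) \<le> dist z0 (fst x) + dist z0 z1 + dist z1 (snd x)"
      using dist_triangle[of "fst x" "snd x" z0] dist_triangle[of z0 "snd x" z1] dist_commute[of "fst x" z0] by linarith
    then have "dist (fst x) (snd x) powr p \<le> (dist z0 (fst x) + dist z0 z1 + dist z1 (snd x)) powr p"
      using assms by (auto intro!: powr_mono2)
    also have "\<dots> \<le> c * (dist z0 (fst x) powr p + dist z0 z1 powr p + dist z1 (snd x) powr p)"
      unfolding c_def by (rule pw3) (use assms in auto)
    finally have "dist (fst x) (snd x) powr p \<le> c * dist z0 (fst x) powr p + c * dist z0 z1 powr p + c * dist z1 (snd x) powr p"
      by (simp add: algebra_simps)
    then show "ennreal (dist (fst x) (snd x) powr p) \<le> ennreal (c * dist z0 (fst x) powr p) + ennreal (c * dist z0 z1 powr p) + ennreal (c * dist z1 (snd x) powr p)"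
      using c0 by (simp add: ennreal_plus[symmetric] del: ennreal_plus ennreal_leI)
  qed
  also have "\<dots> = (\<integral>\<^sup>+x. ennreal (c * dist z0 (fst x) powr p) \<partial>\<gamma>) + (\<integral>\<^sup>+x. ennreal (c * dist z0 z1 powr p) \<partial>\<gamma>) + (\<integral>\<^sup>+x. ennreal (c * dist z1 (snd x) powr p) \<partial>\<gamma>)"
    by (simp add: nn_integral_add)
  also have "\<dots> = ennreal c * (\<integral>\<^sup>+z. ennreal (dist z0 z powr p) \<partial>A) + ennreal (c * dist z0 z1 powr p) + ennreal c * (\<integral>\<^sup>+z. ennreal (dist z1 z powr p) \<partial>B)"
    using coupling_nn_fst_cmult[OF \<gamma>, of "\<lambda>z. dist z0 z powr p" c] coupling_nn_snd_cmult[OF \<gamma>, of "\<lambda>z. dist z1 z powr p" c] c0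
    by (simp add: emeasure_space_1)
  also have "\<dots> < \<infinity>" using z0 z1 by (simp add: ennreal_mult_less_top)
  finally show ?thesis unfolding \<gamma>_def .
qed


lemma wass_self:
  fixes A :: "'a::{metric_space,second_countable_topology} measure"
  assumes "A \<in> Pp p" "0 < p"
  shows "wasserstein p A A = 0"
proof -
  have bA: "borel_prob A" using assms by (simp add: Pp_def)
  have sA: "sets A = sets borel" using bA by (simp add: borel_prob_def)
  define \<gamma> where "\<gamma> = distr A (borel \<Otimes>\<^sub>M borel) (\<lambda>z. (z, z))"
  have \<gamma>: "\<gamma> \<in> couplings A A" unfolding \<gamma>_def by (rule diag_coupling[OF bA])
  have m: "(\<lambda>z. (z, z)) \<in> A \<rightarrow>\<^sub>M borel \<Otimes>\<^sub>M borel"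
    by (rule measurable_Pair) (auto simp: measurable_cong_sets[OF sA refl])
  have "(\<integral>\<^sup>+x. ennreal (dist (fst x) (snd x) powr p) \<partial>\<gamma>) = (\<integral>\<^sup>+z. ennreal (dist (fst (z,z)) (snd (z,z)) powr p) \<partial>A)"
    unfolding \<gamma>_def
  proof (rule nn_integral_distr[OF m])
    have "(\<lambda>x. ennreal (dist (fst x) (snd x) powr p)) \<in> borel_measurable (borel \<Otimes>\<^sub>M (borel :: 'a measure))"
      by measurable
    then show "(\<lambda>x. ennreal (dist (fst x) (snd x) powr p)) \<in> borel_measurable (distr A (borel \<Otimes>\<^sub>M borel) (\<lambda>z. (z, z)))"
      by (metis measurable_cong_sets[OF sets_distr refl])
  qed
  also have "\<dots> = 0" by simp
  finally have c0: "(\<integral>\<^sup>+x. ennreal (dist (fst x) (snd x) powr p) \<partial>\<gamma>) = 0" .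
  have "(INF \<gamma>\<in>couplings A A. \<integral>\<^sup>+x. ennreal (dist (fst x) (snd x) powr p) \<partial>\<gamma>) \<le> 0"
    using INF_lower[OF \<gamma>, of "\<lambda>\<gamma>. \<integral>\<^sup>+x. ennreal (dist (fst x) (snd x) powr p) \<partial>\<gamma>"] c0 by simp
  then have "(INF \<gamma>\<in>couplings A A. \<integral>\<^sup>+x. ennreal (dist (fst x) (snd x) powr p) \<partial>\<gamma>) = 0"
    by (simp only: le_zero_eq)
  then show ?thesis unfolding wasserstein_def by simp
qed



lemma key_eps:
  fixes A B :: "'a::polish_space measure" and l G :: "'a \<Rightarrow> real"
  assumes p1: "1 < p" and q: "q = p / (p - 1)"
    and A: "A \<in> Pp p" and B: "B \<in> Pp p"
    and ml[measurable]: "l \<in> borel_measurable borel" and iA: "integrable A l" and iB: "integrable B l"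
    and mG[measurable]: "G \<in> borel_measurable borel" and G0: "\<And>z. 0 \<le> G z"
    and H: "\<And>z z'. \<bar>l z' - l z\<bar> \<le> (G z + G z') / 2 * dist z z'"
    and IA: "(\<integral>\<^sup>+z. ennreal (G z powr q) \<partial>A) = ennreal a" and a0: "0 \<le> a" and am: "a powr (1/q) \<le> m"
    and IB: "(\<integral>\<^sup>+z. ennreal (G z powr q) \<partial>B) = ennreal b" and b0: "0 \<le> b" and bm: "b powr (1/q) \<le> m"
    and W: "wasserstein p A B \<le> \<alpha>" and eps: "0 < \<epsilon>"
  shows "\<bar>risk B l - risk A l\<bar> \<le> m * (\<alpha> + \<epsilon>)"
proof -
  have p0: "0 < p" using p1 by simp
  have q1: "1 < q" using p1 q by (simp add: less_divide_eq)
  have iq: "1/q = (p-1)/p" using q by simp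
  have "(p-1)/p = 1 - 1/p" using p0 by (simp add: diff_divide_distrib)
  then have pq: "1/p + 1/q = 1" using iq by simp
  have m0: "0 \<le> m" using am by (smt (verit) powr_ge_zero)
  have \<alpha>0: "0 \<le> \<alpha>" using W unfolding wasserstein_def by (smt (verit) powr_ge_zero)
  define cost where "cost = (\<lambda>\<gamma>::('a \<times> 'a) measure. \<integral>\<^sup>+x. ennreal (dist (fst x) (snd x) powr p) \<partial>\<gamma>)"
  define I where "I = (INF \<gamma>\<in>couplings A B. cost \<gamma>)"
  have bA: "borel_prob A" and bB: "borel_prob B" using A B by (auto simp: Pp_def)
  have "I \<le> cost (A \<Otimes>\<^sub>M B)" unfolding I_def by (rule INF_lower[OF prod_coupling[OF bA bB]])
  also have "\<dots> < \<infinity>" unfolding cost_def by (rule cost_finite[OF A B p0])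
  finally have Ifin: "I < \<infinity>" .
  have "enn2real I powr (1/p) \<le> \<alpha>" using W unfolding wasserstein_def I_def cost_def .
  then have "(enn2real I powr (1/p)) powr p \<le> \<alpha> powr p"
    by (intro powr_mono2) (use p0 in auto)
  then have "enn2real I \<le> \<alpha> powr p" using p0 by (simp add: powr_powr)
  also have "\<dots> < (\<alpha> + \<epsilon>) powr p" using \<alpha>0 eps p0 by (intro powr_less_mono2) auto
  finally have "enn2real I < (\<alpha> + \<epsilon>) powr p" .
  then have "ennreal (enn2real I) < ennreal ((\<alpha> + \<epsilon>) powr p)"
    by (subst ennreal_less_iff) auto
  then have "I < ennreal ((\<alpha> + \<epsilon>) powr p)" using ennreal_enn2real[OF Ifin[unfolded infinity_ennreal_def]] by simp
  then obtain \<gamma> where \<gamma>: "\<gamma> \<in> couplings A B" and c\<gamma>: "cost \<gamma> < ennreal ((\<alpha> + \<epsilon>) powr p)"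
    unfolding I_def by (auto simp: INF_less_iff)
  define C where "C = enn2real (cost \<gamma>)"
  have C0: "0 \<le> C" by (simp add: C_def)
  have "cost \<gamma> < top" using c\<gamma> order.strict_trans ennreal_less_top by blast
  then have costC: "cost \<gamma> = ennreal C" unfolding C_def by simp
  have "C < (\<alpha> + \<epsilon>) powr p" using c\<gamma> costC C0 by (simp add: ennreal_less_iff)
  then have "C powr (1/p) \<le> ((\<alpha> + \<epsilon>) powr p) powr (1/p)"
    using C0 p0 by (intro powr_mono2) auto
  then have Cp: "C powr (1/p) \<le> \<alpha> + \<epsilon>" using p0 \<alpha>0 eps by (simp add: powr_powr)
  note cf = coupling_facts[OF \<gamma>]
  interpret prob_space \<gamma> by (rule cf(1))
  note [measurable] = cf(5) cf(6)
  have r: "risk B l - risk A l = (\<integral>x. l (snd x) - l (fst x) \<partial>\<gamma>)"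
    unfolding risk_def
    using coupling_int_fst[OF \<gamma> ml iA] coupling_int_snd[OF \<gamma> ml iB] by simp
  have "\<bar>\<integral>x. l (snd x) - l (fst x) \<partial>\<gamma>\<bar> \<le> (\<integral>x. \<bar>l (snd x) - l (fst x)\<bar> \<partial>\<gamma>)"
    by (rule integral_abs_bound)
  also have "\<dots> = enn2real (\<integral>\<^sup>+x. ennreal \<bar>l (snd x) - l (fst x)\<bar> \<partial>\<gamma>)"
    by (rule integral_eq_nn_integral) auto
  also have "\<dots> \<le> (a powr (1/q) + b powr (1/q)) / 2 * C powr (1/p)"
  proof -
    have X1: "(\<integral>\<^sup>+x. ennreal (G (fst x) * dist (fst x) (snd x)) \<partial>\<gamma>) \<le> ennreal (a powr (1/q) * C powr (1/p))"
    proof (rule holder_nn[OF p1 q1 pq])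
      show "(\<integral>\<^sup>+x. ennreal (G (fst x) powr q) \<partial>\<gamma>) = ennreal a"
        using coupling_nn_fst[OF \<gamma>, of "\<lambda>z. ennreal (G z powr q)"] IA by simp
      show "(\<integral>\<^sup>+x. ennreal (dist (fst x) (snd x) powr p) \<partial>\<gamma>) = ennreal C"
        using costC by (simp add: cost_def)
    qed (use a0 C0 G0 in auto)
    have X2: "(\<integral>\<^sup>+x. ennreal (G (snd x) * dist (fst x) (snd x)) \<partial>\<gamma>) \<le> ennreal (b powr (1/q) * C powr (1/p))"
    proof (rule holder_nn[OF p1 q1 pq])
      show "(\<integral>\<^sup>+x. ennreal (G (snd x) powr q) \<partial>\<gamma>) = ennreal b"
        using coupling_nn_snd[OF \<gamma>, of "\<lambda>z. ennreal (G z powr q)"] IB by simp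
      show "(\<integral>\<^sup>+x. ennreal (dist (fst x) (snd x) powr p) \<partial>\<gamma>) = ennreal C"
        using costC by (simp add: cost_def)
    qed (use b0 C0 G0 in auto)
    have "(\<integral>\<^sup>+x. ennreal \<bar>l (snd x) - l (fst x)\<bar> \<partial>\<gamma>) \<le>
        (\<integral>\<^sup>+x. ennreal (1/2) * ennreal (G (fst x) * dist (fst x) (snd x)) + ennreal (1/2) * ennreal (G (snd x) * dist (fst x) (snd x)) \<partial>\<gamma>)"
    proof (rule nn_integral_mono)
      fix x :: "'a \<times> 'a"
      have hx: "\<bar>l (snd x) - l (fst x)\<bar> \<le> (G (fst x) + G (snd x)) / 2 * dist (fst x) (snd x)" by (rule H)
      have "\<bar>l (snd x) - l (fst x)\<bar> \<le> 1/2 * (G (fst x) * dist (fst x) (snd x)) + 1/2 * (G (snd x) * dist (fst x) (snd x))"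
        using hx by (simp add: algebra_simps)
      moreover have "ennreal (1/2) * ennreal (G (fst x) * dist (fst x) (snd x)) + ennreal (1/2) * ennreal (G (snd x) * dist (fst x) (snd x))
          = ennreal (1/2 * (G (fst x) * dist (fst x) (snd x)) + 1/2 * (G (snd x) * dist (fst x) (snd x)))"
      proof -
        have h: "0 \<le> (1/2::real)" by simp
        have u1: "0 \<le> G (fst x) * dist (fst x) (snd x)" using G0 by simp
        have u2: "0 \<le> G (snd x) * dist (fst x) (snd x)" using G0 by simp
        show ?thesis
          by (simp only: ennreal_mult[OF h u1, symmetric] ennreal_mult[OF h u2, symmetric]
              ennreal_plus[OF mult_nonneg_nonneg[OF h u1] mult_nonneg_nonneg[OF h u2], symmetric])
      qed
      ultimately show "ennreal \<bar>l (snd x) - l (fst x)\<bar> \<le> ennreal (1/2) * ennreal (G (fst x) * dist (fst x) (snd x)) + ennreal (1/2) * ennreal (G (snd x) * dist (fst x) (snd x))"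
        by (simp add: ennreal_leI)
    qed
    also have "\<dots> = ennreal (1/2) * (\<integral>\<^sup>+x. ennreal (G (fst x) * dist (fst x) (snd x)) \<partial>\<gamma>) + ennreal (1/2) * (\<integral>\<^sup>+x. ennreal (G (snd x) * dist (fst x) (snd x)) \<partial>\<gamma>)"
      by (simp add: nn_integral_add nn_integral_cmult)
    also have "\<dots> \<le> ennreal (1/2) * ennreal (a powr (1/q) * C powr (1/p)) + ennreal (1/2) * ennreal (b powr (1/q) * C powr (1/p))"
      by (intro add_mono mult_left_mono X1 X2) auto
    also have "\<dots> = ennreal (1/2 * (a powr (1/q) * C powr (1/p)) + 1/2 * (b powr (1/q) * C powr (1/p)))"
    proof -
      have h: "0 \<le> (1/2::real)" by simp
      have u1: "0 \<le> a powr (1/q) * C powr (1/p)" by simp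
      have u2: "0 \<le> b powr (1/q) * C powr (1/p)" by simp
      show ?thesis
        by (simp only: ennreal_mult[OF h u1, symmetric] ennreal_mult[OF h u2, symmetric]
            ennreal_plus[OF mult_nonneg_nonneg[OF h u1] mult_nonneg_nonneg[OF h u2], symmetric])
    qed
    also have "\<dots> = ennreal ((a powr (1/q) + b powr (1/q)) / 2 * C powr (1/p))"
      by (simp add: field_simps)
    finally have le: "(\<integral>\<^sup>+x. ennreal \<bar>l (snd x) - l (fst x)\<bar> \<partial>\<gamma>) \<le> ennreal ((a powr (1/q) + b powr (1/q)) / 2 * C powr (1/p))" .
    show ?thesis using enn2real_mono[OF le] by simp
  qed
  also have "\<dots> \<le> (m + m) / 2 * (\<alpha> + \<epsilon>)"
    by (intro mult_mono divide_right_mono add_mono am bm Cp) (use m0 in auto)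
  also have "\<dots> = m * (\<alpha> + \<epsilon>)" by simp
  finally show ?thesis using r by simp
qed


lemma key:
  fixes A B :: "'a::polish_space measure" and l G :: "'a \<Rightarrow> real"
  assumes p1: "1 < p" and q: "q = p / (p - 1)"
    and A: "A \<in> Pp p" and B: "B \<in> Pp p"
    and ml: "l \<in> borel_measurable borel" and iA: "integrable A l" and iB: "integrable B l"
    and mG: "G \<in> borel_measurable borel" and G0: "\<And>z. 0 \<le> G z"
    and H: "\<And>z z'. \<bar>l z' - l z\<bar> \<le> (G z + G z') / 2 * dist z z'"
    and IA: "(\<integral>\<^sup>+z. ennreal (G z powr q) \<partial>A) = ennreal a" and a0: "0 \<le> a" and am: "a powr (1/q) \<le> m"
    and IB: "(\<integral>\<^sup>+z. ennreal (G z powr q) \<partial>B) = ennreal b" and b0: "0 \<le> b" and bm: "b powr (1/q) \<le> m"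
    and W: "wasserstein p A B \<le> \<alpha>"
  shows "\<bar>risk B l - risk A l\<bar> \<le> m * \<alpha>"
proof (rule field_le_epsilon)
  fix e :: real assume e: "0 < e"
  have m0: "0 \<le> m" using am by (smt (verit) powr_ge_zero)
  define \<epsilon> where "\<epsilon> = e / (m + 1)"
  have \<epsilon>: "0 < \<epsilon>" using e m0 by (simp add: \<epsilon>_def)
  have "\<bar>risk B l - risk A l\<bar> \<le> m * (\<alpha> + \<epsilon>)"
    by (rule key_eps[OF p1 q A B ml iA iB mG G0 H IA a0 am IB b0 bm W \<epsilon>])
  also have "m * \<epsilon> \<le> e"
    using e m0 by (simp add: \<epsilon>_def field_simps)
  then have "m * (\<alpha> + \<epsilon>) \<le> m * \<alpha> + e" by (simp add: algebra_simps)
  finally show "\<bar>risk B l - risk A l\<bar> \<le> m * \<alpha> + e" .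
qed

theorem mainTheorem5:
  fixes P :: "'a::polish_space measure"
    and l G :: "'a \<Rightarrow> real"
    and p q \<alpha> :: real
    and \<mu> :: ereal
  assumes "1 < p" and "q = p / (p - 1)" and "0 < \<alpha>"
    and "P \<in> Pp p"
    and "l \<in> borel_measurable borel"
    and "\<forall>Q\<in>wball p \<alpha> P. integrable Q l"
    and "G \<in> borel_measurable borel" and "\<forall>z. 0 \<le> G z"
    and "\<forall>z z'. \<exists>\<rho>. constant_speed_geodesic \<rho> z z' \<and>
            \<bar>l z' - l z\<bar> \<le> (LBINT t=0..1. G (\<rho> t)) * dist z z' \<and>
            (\<forall>t\<in>{0..1}. G (\<rho> t) \<le> (1 - t) * G z + t * G z')"
    and "\<mu> = (SUP Q\<in>wball p \<alpha> P. Lq_norm q Q G)"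
  shows "\<forall>Q\<in>wball p \<alpha> P.
           ereal (risk Q l) \<le> worst_risk p \<alpha> P l \<and>
           worst_risk p \<alpha> P l \<le> ereal (risk Q l) + 2 * ereal \<alpha> * \<mu>"
proof -
  note p1 = assms(1) and q = assms(2) and \<alpha>0 = assms(3) and PP = assms(4) and ml = assms(5)
    and int = assms(6) and mG = assms(7) and G0 = assms(8) and geo = assms(9) and \<mu> = assms(10)
  have p0: "0 < p" using p1 by simp
  have H: "\<bar>l z' - l z\<bar> \<le> (G z + G z') / 2 * dist z z'" for z z'
  proof -
    obtain \<rho> where "\<bar>l z' - l z\<bar> \<le> (LBINT t=0..1. G (\<rho> t)) * dist z z'"
      and le: "\<forall>t\<in>{0..1}. G (\<rho> t) \<le> (1 - t) * G z + t * G z'"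
      using geo by blast
    moreover have "(LBINT t=0..1. G (\<rho> t)) \<le> (G z + G z') / 2"
      by (rule geo_int_bound) (use G0 le in auto)
    ultimately show ?thesis
      by (meson dual_order.trans mult_right_mono zero_le_dist)
  qed
  have Pball: "P \<in> wball p \<alpha> P"
    unfolding wball_def using PP wass_self[OF PP p0] \<alpha>0 by simp
  have \<mu>0: "0 \<le> \<mu>"
  proof -
    have "0 \<le> Lq_norm q P G" unfolding Lq_norm_def Let_def by simp
    also have "\<dots> \<le> \<mu>" unfolding \<mu> by (rule SUP_upper[OF Pball])
    finally show ?thesis .
  qed
  show ?thesis
  proof
    fix Q assume Q: "Q \<in> wball p \<alpha> P"
    have first: "ereal (risk Q l) \<le> worst_risk p \<alpha> P l"
      unfolding worst_risk_def by (rule SUP_upper[OF Q])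
    have second: "worst_risk p \<alpha> P l \<le> ereal (risk Q l) + 2 * ereal \<alpha> * \<mu>"
    proof (cases "\<mu> = \<infinity>")
      case True
      then show ?thesis using \<alpha>0 by simp
    next
      case False
      then obtain m where m: "\<mu> = ereal m" using \<mu>0 by (cases \<mu>) auto
      have bnd: "\<exists>a. (\<integral>\<^sup>+z. ennreal (G z powr q) \<partial>Q') = ennreal a \<and> 0 \<le> a \<and> a powr (1/q) \<le> m"
        if Q': "Q' \<in> wball p \<alpha> P" for Q'
      proof -
        define I where "I = (\<integral>\<^sup>+z. ennreal (G z powr q) \<partial>Q')"
        have "Lq_norm q Q' G \<le> ereal m" unfolding m[symmetric] \<mu> by (rule SUP_upper[OF Q'])
        then have nI: "I \<noteq> \<infinity>" and le: "ereal (enn2real I powr (1/q)) \<le> ereal m"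
          unfolding Lq_norm_def Let_def I_def[symmetric] by (auto split: if_splits)
        have "I = ennreal (enn2real I)" using nI by (simp add: less_top[symmetric])
        then show ?thesis using le by (intro exI[of _ "enn2real I"]) (simp add: I_def[symmetric])
      qed
      have QP: "Q \<in> Pp p" using Q by (simp add: wball_def)
      obtain a where a: "(\<integral>\<^sup>+z. ennreal (G z powr q) \<partial>P) = ennreal a" "0 \<le> a" "a powr (1/q) \<le> m"
        using bnd[OF Pball] by blast
      have diff: "\<bar>risk Q' l - risk P l\<bar> \<le> m * \<alpha>" if Q': "Q' \<in> wball p \<alpha> P" for Q'
      proof -
        obtain b where b: "(\<integral>\<^sup>+z. ennreal (G z powr q) \<partial>Q') = ennreal b" "0 \<le> b" "b powr (1/q) \<le> m"
          using bnd[OF Q'] by blast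
        show ?thesis
          by (rule key[OF p1 q PP _ ml _ _ mG _ H a b])
            (use Q' int Pball G0 in \<open>auto simp: wball_def\<close>)
      qed
      have "worst_risk p \<alpha> P l \<le> ereal (risk Q l + 2 * \<alpha> * m)"
        unfolding worst_risk_def
      proof (rule SUP_least)
        fix Q' assume Q': "Q' \<in> wball p \<alpha> P"
        show "ereal (risk Q' l) \<le> ereal (risk Q l + 2 * \<alpha> * m)"
          using diff[OF Q'] diff[OF Q] by (simp add: abs_le_iff algebra_simps)
      qed
      then show ?thesis using m by simp
    qed
    show "ereal (risk Q l) \<le> worst_risk p \<alpha> P l \<and>
           worst_risk p \<alpha> P l \<le> ereal (risk Q l) + 2 * ereal \<alpha> * \<mu>"
      using first second by simp
  qed
qed

end
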